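(* Suppose $f\colon[0,\infty)\to[0,\infty)$ satisfies (M), (S) and (L). Then for any $\varepsilon\in(0,q_f)$ there exists $C\ge1$ such that $$C^{-1}\sigma^{\varepsilon-q_f}\le f(F^{-1}(\sigma))\le C\sigma^{-\varepsilon-q_f}\quad\text{and}\quad F^{-1}(\sigma)\le C\sigma^{1-q_f-\varepsilon}$$ for all sufficiently small $\sigma>0$.
   Context: (M) $f$ continuous, nondecreasing, $f(u)>0$ for $u>0$. (S) there is $\tau_0>0$ with $f\in C^1([\tau_0,\infty))$ and $\int_{\tau_0}^\infty ds/f(s)<\infty$. $F(u)=\int_u^\infty ds/f(s)$ for $u>0$, $F_0=\lim_{u\to0}F(u)$; $F$ is a strictly decreasing bijection $(0,\infty)\to(0,F_0)$ with inverse $F^{-1}\colon(0,F_0)\to(0,\infty)$. (L) $q_f:=\lim_{u\to\infty}f'(u)F(u)$ exists and is finite. *)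

theory Defs
  imports "HOL-Analysis.Analysis"
begin

definition bigF :: "(real \<Rightarrow> real) \<Rightarrow> real \<Rightarrow> real" where
  "bigF f u = integral {u..} (\<lambda>s. 1 / f s)"

definition bigF_inv :: "(real \<Rightarrow> real) \<Rightarrow> real \<Rightarrow> real" where
  "bigF_inv f \<sigma> = inv_into {0<..} (bigF f) \<sigma>"

end

theory Submission
  imports Defs
begin

lemma intsub:
  fixes g :: "real \<Rightarrow> real"
  assumes "g integrable_on {a..}" "\<And>x. x \<ge> a \<Longrightarrow> g x \<ge> 0" "a \<le> u"
  shows "g integrable_on {u..}"
proof -
  have "g absolutely_integrable_on {a..}"
    using assms by (intro nonnegative_absolutely_integrable_1) auto
  hence "g absolutely_integrable_on {u..}"
    by (rule set_integrable_subset) (use assms in auto)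
  thus ?thesis using set_lebesgue_integral_eq_integral(1) by blast
qed

lemma split_int:
  fixes g :: "real \<Rightarrow> real"
  assumes "g integrable_on {u..v}" "g integrable_on {v..}" "u \<le> v"
  shows "(g has_integral (integral {u..v} g + integral {v..} g)) {u..}"
proof -
  have "(g has_integral (integral {u..v} g + integral {v..} g)) ({u..v} \<union> {v..})"
  proof (rule has_integral_Un)
    show "negligible ({u..v} \<inter> {v..})"
    proof -
      have "{u..v} \<inter> {v..} = {v}" using assms(3) by auto
      thus ?thesis by simp
    qed
  qed (use assms in auto)
  moreover have "{u..v} \<union> {v..} = {u..}" using assms(3) by auto
  ultimately show ?thesis by simp
qed

theorem lemma3p1:
  fixes f f' :: "real \<Rightarrow> real" and \<tau>0 q :: real
  assumes nonneg: "\<forall>u\<ge>0. f u \<ge> 0"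
    and M_cont: "continuous_on {0..} f"
    and M_mono: "mono_on {0..} f"
    and M_pos: "\<forall>u>0. f u > 0"
    and S_tau: "\<tau>0 > 0"
    and S_deriv: "\<forall>x\<ge>\<tau>0. (f has_real_derivative f' x) (at x within {\<tau>0..})"
    and S_C1: "continuous_on {\<tau>0..} f'"
    and S_int: "(\<lambda>s. 1 / f s) integrable_on {\<tau>0..}"
    and L: "((\<lambda>u. f' u * bigF f u) \<longlongrightarrow> q) at_top"
  shows "\<forall>\<epsilon>. 0 < \<epsilon> \<and> \<epsilon> < q \<longrightarrow>
           (\<exists>C\<ge>1. \<forall>\<^sub>F \<sigma> in at_right 0.
              inverse C * \<sigma> powr (\<epsilon> - q) \<le> f (bigF_inv f \<sigma>) \<and>
              f (bigF_inv f \<sigma>) \<le> C * \<sigma> powr (- \<epsilon> - q) \<and>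
              bigF_inv f \<sigma> \<le> C * \<sigma> powr (1 - q - \<epsilon>))"
proof -
  define g where "g = (\<lambda>s. 1 / f s)"
  define F where "F = bigF f"
  have Fd: "F u = integral {u..} g" for u unfolding F_def bigF_def g_def by simp
  have fpos: "f u > 0" if "u > 0" for u using M_pos that by auto
  have fmono: "f u \<le> f v" if "0 \<le> u" "u \<le> v" for u v
    using M_mono that by (auto simp: mono_on_def)
  have gcont: "continuous_on {u..v} g" if "0 < u" for u v
    unfolding g_def
  proof (intro continuous_intros)
    show "continuous_on {u..v} f" by (rule continuous_on_subset[OF M_cont]) (use that in auto)
    show "\<forall>x\<in>{u..v}. f x \<noteq> 0"
    proof
      fix x assume "x \<in> {u..v}"
      hence "x > 0" using that by auto
      thus "f x \<noteq> 0" using fpos[of x] by simp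
    qed
  qed
  have Sg: "g integrable_on {\<tau>0..}" using S_int unfolding g_def .
  have gnn: "g x \<ge> 0" if "x \<ge> 0" for x using nonneg that unfolding g_def by auto
  have gint: "g integrable_on {u..}" if "0 < u" for u
  proof (cases "\<tau>0 \<le> u")
    case True thus ?thesis using intsub[OF Sg] gnn S_tau by force
  next
    case False
    have "g integrable_on {u..\<tau>0}" using gcont[OF that] integrable_continuous_interval by blast
    from split_int[OF this Sg] False show ?thesis by auto
  qed
  have Fsplit: "F u = integral {u..v} g + F v" if "0 < u" "u \<le> v" for u v
    using split_int[OF integrable_continuous_interval[OF gcont[OF that(1)]] gint[of v] that(2)] that
    unfolding Fd by (auto intro: integral_unique)
  have Fnn: "F u \<ge> 0" if "u > 0" for u
    unfolding Fd using that by (intro integral_nonneg gint) (auto intro: gnn)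
  have intpos: "integral {u..v} g \<ge> (v-u) / f v" if "0<u" "u \<le> v" for u v
  proof -
    have "integral {u..v} (\<lambda>_. 1 / f v) \<le> integral {u..v} g"
    proof (rule integral_le)
      show "g integrable_on {u..v}" using gcont[OF that(1)] integrable_continuous_interval by blast
      show "\<And>x. x \<in> {u..v} \<Longrightarrow> 1 / f v \<le> g x"
        unfolding g_def using that fmono fpos by (auto intro!: divide_left_mono)
    qed auto
    thus ?thesis using that by simp
  qed
  have Fpos: "F u > 0" if "u > 0" for u
  proof -
    have "(u+1-u) / f (u+1) > 0" using fpos that by auto
    thus ?thesis using Fsplit[of u "u+1"] intpos[of u "u+1"] Fnn[of "u+1"] that by linarith
  qed
  have Fdec: "F v < F u" if "0 < u" "u < v" for u v
  proof -
    have "(v-u) / f v > 0" using fpos that by auto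
    thus ?thesis using Fsplit[of u v] intpos[of u v] that by linarith
  qed
  have Finj: "inj_on F {0<..}"
    unfolding inj_on_def by (metis Fdec greaterThan_iff less_irrefl linorder_neqE)
  have Fder: "(F has_real_derivative - g x) (at x)" if "0 < x" for x
  proof -
    define a where "a = x/2"
    define b where "b = x+1"
    have ab: "0 < a" "a < x" "x < b" using that unfolding a_def b_def by auto
    have "((\<lambda>u. integral {a..u} g) has_real_derivative g x) (at x within {a..b})"
      unfolding has_real_derivative_iff_has_vector_derivative
      by (rule integral_has_vector_derivative[OF gcont[OF ab(1)]]) (use ab in auto)
    hence "((\<lambda>u. F a - integral {a..u} g) has_real_derivative - g x) (at x within {a..b})"
      by (intro derivative_eq_intros) auto
    hence "(F has_real_derivative - g x) (at x within {a..b})"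
      by (rule has_field_derivative_transform_within[where d=1]) (use ab Fsplit in auto)
    thus ?thesis using at_within_Icc_at[of a x b] ab by simp
  qed
  have Fcont: "isCont F x" if "0 < x" for x using Fder[OF that] DERIV_isCont by blast
  have f'der: "(f has_real_derivative f' x) (at x)" if "\<tau>0 < x" for x
  proof -
    have "at x within {\<tau>0..} = at x"
      using that by (intro at_within_interior) (simp add: interior_real_atLeast)
    thus ?thesis using S_deriv that by (metis less_imp_le)
  qed
  have prod_der: "((\<lambda>u. f u * F u powr a) has_real_derivative
      F x powr (a-1) * (f' x * F x - a)) (at x)" if "\<tau>0 < x" for x a
  proof -
    have x0: "x > 0" using that S_tau by auto
    have "((\<lambda>u. f u * F u powr a) has_real_derivative
        f' x * F x powr a + (a * F x powr (a - real 1) * (- g x)) * f x) (at x)"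
      using DERIV_mult[OF f'der[OF that] DERIV_fun_powr[OF Fder[OF x0] Fpos[OF x0]]] .
    moreover have "f' x * F x powr a + (a * F x powr (a - real 1) * (- g x)) * f x
        = F x powr (a-1) * (f' x * F x - a)"
    proof -
      have "F x powr a = F x powr (a-1) * F x"
        using powr_add[of "F x" "a-1" 1] Fpos[OF x0] by simp
      moreover have "g x * f x = 1" unfolding g_def using fpos[OF x0] by simp
      ultimately show ?thesis by (simp add: algebra_simps)
    qed
    ultimately show ?thesis by simp
  qed
  have lowmono: "f T * F T powr a \<le> f u * F u powr a"
    if "\<tau>0 < T" "T \<le> u" "\<forall>x\<ge>T. a \<le> f' x * F x" for T u a
  proof (rule DERIV_nonneg_imp_nondecreasing[OF that(2)])
    fix x assume "T \<le> x" "x \<le> u"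
    hence x: "\<tau>0 < x" "x > 0" using that S_tau by auto
    show "\<exists>y. ((\<lambda>u. f u * F u powr a) has_real_derivative y) (at x) \<and> 0 \<le> y"
      using prod_der[OF x(1)] that \<open>T \<le> x\<close> by (intro exI conjI) auto
  qed
  have upmono: "f u * F u powr a \<le> f T * F T powr a"
    if "\<tau>0 < T" "T \<le> u" "\<forall>x\<ge>T. f' x * F x \<le> a" for T u a
  proof -
    have "- (f T * F T powr a) \<le> - (f u * F u powr a)"
    proof (rule DERIV_nonneg_imp_nondecreasing[OF that(2)])
      fix x assume "T \<le> x" "x \<le> u"
      hence x: "\<tau>0 < x" "x > 0" using that S_tau by auto
      have "0 \<le> F x powr (a-1) * (a - f' x * F x)"
        using that \<open>T \<le> x\<close> by auto
      thus "\<exists>y. ((\<lambda>u. - (f u * F u powr a)) has_real_derivative y) (at x) \<and> 0 \<le> y"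
        using DERIV_minus[OF prod_der[OF x(1)]] by (intro exI conjI) (auto simp: algebra_simps)
    qed
    thus ?thesis by simp
  qed
  have psi_der: "((\<lambda>u. F u powr (1-a) - k*u) has_real_derivative
      (a-1) / (f x * F x powr a) - k) (at x)" if "0 < x" for x a k
  proof -
    have "((\<lambda>u. F u powr (1-a) - k*u) has_real_derivative
      (1-a) * F x powr (1-a - real 1) * (- g x) - k * 1) (at x)"
      by (intro DERIV_diff DERIV_fun_powr[OF Fder[OF that] Fpos[OF that]] DERIV_cmult DERIV_ident)
    moreover have "(1-a) * F x powr (1-a - real 1) * (- g x) - k * 1 = (a-1) / (f x * F x powr a) - k"
      using Fpos[OF that] fpos[OF that] unfolding g_def by (simp add: powr_minus field_simps)
    ultimately show ?thesis by simp
  qed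
  have q1: "q \<ge> 1"
  proof (rule ccontr)
    assume "\<not> q \<ge> 1"
    define a where "a = (q+1)/2"
    have a: "a < 1" "q < a" using \<open>\<not> q \<ge> 1\<close> unfolding a_def by auto
    have "\<forall>\<^sub>F u in at_top. f' u * F u < a" using order_tendstoD(2)[OF L[folded F_def] a(2)] .
    then obtain N where N: "\<forall>u\<ge>N. f' u * F u < a" by (auto simp: eventually_at_top_linorder)
    define T where "T = max N (\<tau>0+1)"
    have T: "\<tau>0 < T" "T > 0" "N \<le> T" using S_tau unfolding T_def by auto
    define c2 where "c2 = f T * F T powr a"
    have c2: "c2 > 0" unfolding c2_def using fpos[OF T(2)] Fpos[OF T(2)] by simp
    have up: "f u * F u powr a \<le> c2" if "T \<le> u" for u
      unfolding c2_def using upmono[OF T(1) that, of a] N T by (meson less_imp_le order_trans)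
    define k where "k = (a-1)/c2"
    have k: "k < 0" unfolding k_def using c2 a by (simp add: divide_neg_pos)
    have psi: "F u powr (1-a) - k*u \<le> F T powr (1-a) - k*T" if "T \<le> u" for u
    proof -
      have "- (F T powr (1-a) - k*T) \<le> - (F u powr (1-a) - k*u)"
      proof (rule DERIV_nonneg_imp_nondecreasing[OF that])
        fix x assume "T \<le> x" "x \<le> u"
        hence x: "x > 0" using T by auto
        have pos: "0 < f x * F x powr a" using fpos[OF x] Fpos[OF x] by simp
        have "(a-1) / (f x * F x powr a) \<le> (a-1) / c2"
          by (rule divide_left_mono_neg) (use up[OF \<open>T \<le> x\<close>] pos c2 a in auto)
        hence "0 \<le> - ((a-1) / (f x * F x powr a) - k)" unfolding k_def by simp
        thus "\<exists>y. ((\<lambda>u. - (F u powr (1-a) - k*u)) has_real_derivative y) (at x) \<and> 0 \<le> y"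
          using DERIV_minus[OF psi_der[OF x, of a k]] by blast
      qed
      thus ?thesis by simp
    qed
    define u where "u = T + (F T powr (1-a) + 1) / (-k)"
    have "(F T powr (1-a) + 1) / (-k) \<ge> 0" using k by (intro divide_nonneg_pos) auto
    hence Tu: "T \<le> u" unfolding u_def by simp
    have "k * (u - T) = - (F T powr (1-a) + 1)" unfolding u_def using k by simp
    hence "F u powr (1-a) \<le> -1" using psi[OF Tu] by (simp add: algebra_simps)
    moreover have "F u powr (1-a) \<ge> 0" by simp
    ultimately show False by simp
  qed
  show ?thesis
  proof (intro allI impI)
    fix \<epsilon> :: real assume eps: "0 < \<epsilon> \<and> \<epsilon> < q"
    define a1 where "a1 = q - \<epsilon>"
    define a2 where "a2 = q + \<epsilon>"
    have a2: "a2 > 1" unfolding a2_def using eps q1 by auto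
    have "\<forall>\<^sub>F u in at_top. a1 < f' u * F u"
      using order_tendstoD(1)[OF L[folded F_def]] eps unfolding a1_def by auto
    then obtain N1 where N1: "\<forall>u\<ge>N1. a1 < f' u * F u" by (auto simp: eventually_at_top_linorder)
    have "\<forall>\<^sub>F u in at_top. f' u * F u < a2"
      using order_tendstoD(2)[OF L[folded F_def]] eps unfolding a2_def by auto
    then obtain N2 where N2: "\<forall>u\<ge>N2. f' u * F u < a2" by (auto simp: eventually_at_top_linorder)
    define T where "T = max (max N1 N2) (max 1 (\<tau>0+1))"
    have T: "\<tau>0 < T" "T > 0" "N1 \<le> T" "N2 \<le> T" "T \<ge> 1" using S_tau unfolding T_def by auto
    define c1 where "c1 = f T * F T powr a1"
    have c1: "c1 > 0" unfolding c1_def using fpos[OF T(2)] Fpos[OF T(2)] by simp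
    define c2 where "c2 = f T * F T powr a2"
    have c2: "c2 > 0" unfolding c2_def using fpos[OF T(2)] Fpos[OF T(2)] by simp
    have low: "c1 \<le> f u * F u powr a1" if "T \<le> u" for u
      unfolding c1_def using lowmono[OF T(1) that, of a1] N1 T by (meson less_imp_le order_trans)
    have up: "f u * F u powr a2 \<le> c2" if "T \<le> u" for u
      unfolding c2_def using upmono[OF T(1) that, of a2] N2 T by (meson less_imp_le order_trans)
    define k where "k = (a2-1)/c2"
    have k: "k > 0" unfolding k_def using c2 a2 by simp
    have psi: "F T powr (1-a2) - k*T \<le> F u powr (1-a2) - k*u" if "T \<le> u" for u
    proof (rule DERIV_nonneg_imp_nondecreasing[OF that])
      fix x assume "T \<le> x" "x \<le> u"
      hence x: "x > 0" using T by auto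
      have pos: "0 < f x * F x powr a2" using fpos[OF x] Fpos[OF x] by simp
      have "(a2-1) / c2 \<le> (a2-1) / (f x * F x powr a2)"
        by (rule divide_left_mono) (use up[OF \<open>T \<le> x\<close>] pos c2 a2 in auto)
      hence "0 \<le> (a2-1) / (f x * F x powr a2) - k" unfolding k_def by simp
      thus "\<exists>y. ((\<lambda>u. F u powr (1-a2) - k*u) has_real_derivative y) (at x) \<and> 0 \<le> y"
        using psi_der[OF x, of a2 k] by blast
    qed
    have ubound: "k * (u - T) \<le> F u powr (1-a2)" if "T \<le> u" for u
    proof -
      have "F T powr (1-a2) \<ge> 0" by simp
      moreover have "k * (u - T) = k*u - k*T" by (simp add: algebra_simps)
      ultimately show ?thesis using psi[OF that] by linarith
    qed
    define C where "C = max (max 1 (1/c1)) (max c2 (T + 1/k))"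
    have C: "C \<ge> 1" "C \<ge> 1/c1" "C \<ge> c2" "C \<ge> T + 1/k" unfolding C_def by auto
    show "\<exists>C\<ge>1. \<forall>\<^sub>F \<sigma> in at_right 0.
              inverse C * \<sigma> powr (\<epsilon> - q) \<le> f (bigF_inv f \<sigma>) \<and>
              f (bigF_inv f \<sigma>) \<le> C * \<sigma> powr (- \<epsilon> - q) \<and>
              bigF_inv f \<sigma> \<le> C * \<sigma> powr (1 - q - \<epsilon>)"
    proof (intro exI conjI)
      show "C \<ge> 1" by (rule C)
      have m: "min 1 (F T) > 0" using Fpos[OF T(2)] by simp
      show "\<forall>\<^sub>F \<sigma> in at_right 0.
              inverse C * \<sigma> powr (\<epsilon> - q) \<le> f (bigF_inv f \<sigma>) \<and>
              f (bigF_inv f \<sigma>) \<le> C * \<sigma> powr (- \<epsilon> - q) \<and>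
              bigF_inv f \<sigma> \<le> C * \<sigma> powr (1 - q - \<epsilon>)"
        using eventually_at_right_real[OF m]
      proof (rule eventually_mono)
        fix \<sigma> assume "\<sigma> \<in> {0<..<min 1 (F T)}"
        hence s: "0 < \<sigma>" "\<sigma> < 1" "\<sigma> < F T" by auto
        define b where "b = T + (\<sigma> powr (1-a2) + 1) / k"
        have "(\<sigma> powr (1-a2) + 1) / k \<ge> 0" using k by (intro divide_nonneg_pos) auto
        hence Tb: "T \<le> b" unfolding b_def by simp
        have "k * (b - T) = \<sigma> powr (1-a2) + 1" unfolding b_def using k by simp
        hence gt: "F b powr (1-a2) > \<sigma> powr (1-a2)" using ubound[OF Tb] by simp
        have Fb: "F b < \<sigma>"
        proof (rule ccontr)
          assume "\<not> F b < \<sigma>"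
          hence "F b powr (1-a2) \<le> \<sigma> powr (1-a2)"
            using s a2 by (intro powr_mono2') auto
          thus False using gt by simp
        qed
        have "\<exists>x\<ge>T. x \<le> b \<and> F x = \<sigma>"
          by (rule IVT2) (use Fb s Tb Fcont T in auto)
        then obtain u where u: "T \<le> u" "u \<le> b" "F u = \<sigma>" by blast
        have u0: "u > 0" using u T by auto
        have inv: "bigF_inv f \<sigma> = u"
          unfolding bigF_inv_def F_def[symmetric] using Finj u0 u(3) by (intro inv_into_f_eq) auto
        have fu: "f u > 0" using fpos[OF u0] .
        have sp: "\<sigma> powr a1 > 0" "\<sigma> powr a2 > 0" using s by auto
        have e1: "\<sigma> powr (\<epsilon> - q) = inverse (\<sigma> powr a1)"
          unfolding a1_def using powr_minus[of \<sigma> "q - \<epsilon>"] by simp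
        have e2: "\<sigma> powr (- \<epsilon> - q) = inverse (\<sigma> powr a2)"
          unfolding a2_def using powr_minus[of \<sigma> "q + \<epsilon>"] by (simp add: algebra_simps)
        have e3: "\<sigma> powr (1 - q - \<epsilon>) = \<sigma> powr (1 - a2)" unfolding a2_def by (simp add: algebra_simps)
        have L1: "c1 * inverse (\<sigma> powr a1) \<le> f u"
          using low[OF u(1)] u(3) sp by (simp add: field_simps)
        have iC: "inverse C \<le> c1"
          using le_imp_inverse_le[of "1/c1" C] c1 C(2) by simp
        have R1: "inverse C * \<sigma> powr (\<epsilon> - q) \<le> f (bigF_inv f \<sigma>)"
        proof -
          have "inverse C * inverse (\<sigma> powr a1) \<le> c1 * inverse (\<sigma> powr a1)"
            by (rule mult_right_mono[OF iC]) (use sp in simp)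
          thus ?thesis unfolding inv e1 using L1 by linarith
        qed
        have U1: "f u \<le> c2 * inverse (\<sigma> powr a2)"
          using up[OF u(1)] u(3) sp by (simp add: field_simps)
        have R2: "f (bigF_inv f \<sigma>) \<le> C * \<sigma> powr (- \<epsilon> - q)"
        proof -
          have "c2 * inverse (\<sigma> powr a2) \<le> C * inverse (\<sigma> powr a2)"
            by (rule mult_right_mono[OF C(3)]) (use sp in simp)
          thus ?thesis unfolding inv e2 using U1 by linarith
        qed
        have s1: "1 \<le> \<sigma> powr (1-a2)"
          using powr_mono2'[of "1-a2" \<sigma> 1] s a2 by simp
        have "k * (u - T) \<le> \<sigma> powr (1-a2)" using ubound[OF u(1)] u(3) by simp
        hence "u - T \<le> \<sigma> powr (1-a2) / k" using k by (simp add: field_simps)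
        hence "u \<le> T * 1 + (1/k) * \<sigma> powr (1-a2)" by simp
        also have "\<dots> \<le> T * \<sigma> powr (1-a2) + (1/k) * \<sigma> powr (1-a2)"
          using s1 T(2) by (intro add_right_mono mult_left_mono) auto
        also have "\<dots> = (T + 1/k) * \<sigma> powr (1-a2)" by (simp add: algebra_simps)
        also have "\<dots> \<le> C * \<sigma> powr (1-a2)"
          using C(4) by (intro mult_right_mono) auto
        finally have R3: "bigF_inv f \<sigma> \<le> C * \<sigma> powr (1 - q - \<epsilon>)" unfolding inv e3 .
        show "inverse C * \<sigma> powr (\<epsilon> - q) \<le> f (bigF_inv f \<sigma>) \<and>
              f (bigF_inv f \<sigma>) \<le> C * \<sigma> powr (- \<epsilon> - q) \<and>
              bigF_inv f \<sigma> \<le> C * \<sigma> powr (1 - q - \<epsilon>)" using R1 R2 R3 by blast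
      qed
    qed
  qed
qed

end
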